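(* Let $\rho\in(0,1)$ and $g_\rho(z)=\frac{1-\rho^z}{1-\rho}$ for $z\in[0,1]$. Let $\ell\ge1$, $\Lambda=\{0,\dots,\ell\}$, $\lambda_i=i/\ell$, and $$\mathcal{P}^{\ell,\rho}(\pi)=\{\mathrm{P}\in\mathcal{PM}(\mathbb{R}^n):\ \mathrm{P}(\mathcal{C}(\lambda_i))\ge1-g_\rho(\lambda_i)\ \ \forall i\in\Lambda\}.$$ Then for every $\pmb{x}\in\mathbb{R}^n$ and $b\in\mathbb{R}$, $\sup_{\mathrm{P}\in\mathcal{P}^{\ell,\rho}(\pi)}\mathbf{E}_{\mathrm{P}}[\tilde{\pmb{a}}^T\pmb{x}]\le b$ holds if and only if there exist $w\in\mathbb{R}$, $v_i\ge0$, $\gamma_i\ge0$, $\pmb{u}_i\in\mathbb{R}^n$ ($i\in\Lambda$) and $\alpha_{ij},\beta_{ij}\ge0$ ($i\in\Lambda$, $j\in[n]$) such that $$w+\sum_{i\in\Lambda}(g_\rho(\lambda_i)-1)v_i\le b,$$ $$\gamma_i\overline\delta(\lambda_i)+\sum_{j\in[n]}\alpha_{ij}(\overline a_j(\lambda_i)-\hat a_j)+\sum_{j\in[n]}\beta_{ij}(\hat a_j-\underline a_j(\lambda_i))+\hat{\pmb{a}}^T\pmb{x}\le w-\sum_{k\le i}v_k\quad(i\in\Lambda),$$ $$\alpha_{ij}-\beta_{ij}+\pmb{B}_j^T\pmb{u}_i=x_j\quad(i\in\Lambda,\ j\in[n]),\qquad\|\pmb{u}_i\|_2\le\gamma_i\quad(i\in\Lambda),$$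 where $\pmb{B}_j$ is the $j$th column of $\pmb{B}$.
   Context: Fix $n\ge1$. For each $j\in[n]$ let $\hat a_j\in\mathbb{R}$ and $\underline a_j,\overline a_j>0$, and let $\pi_{\tilde a_j}:\mathbb{R}\to[0,1]$ be continuous with $\pi_{\tilde a_j}(\hat a_j)=1$, $\pi_{\tilde a_j}(t)=0$ for $t\notin(\hat a_j-\underline a_j,\hat a_j+\overline a_j)$, strictly increasing on $[\hat a_j-\underline a_j,\hat a_j]$ and strictly decreasing on $[\hat a_j,\hat a_j+\overline a_j]$. For $\lambda\in(0,1]$ write $\{t:\pi_{\tilde a_j}(t)\ge\lambda\}=[\underline a_j(\lambda),\overline a_j(\lambda)]$, and set $\underline a_j(0)=\hat a_j-\underline a_j$, $\overline a_j(0)=\hat a_j+\overline a_j$. Let $\Gamma>0$ and let $\pi_{\tilde\delta}:[0,\infty)\to[0,1]$ be continuous with $\pi_{\tilde\delta}(0)=1$, strictly decreasing on $[0,\Gamma]$ and $\pi_{\tilde\delta}(t)=0$ for $t\ge\Gamma$; for $\lambda\in(0,1]$ write $\{t\ge0:\pi_{\tilde\delta}(t)\ge\lambda\}=[0,\overline\delta(\lambda)]$ and set $\overline\delta(0)=\Gamma$. Let $\pmb{B}$ be a real $n\times n$ matrix, $\hat{\pmb{a}}=(\hat a_1,\dots,\hat a_n)$, and $\delta(\pmb{a})=\|\pmb{B}(\pmb{a}-\hat{\pmb{a}})\|_2$. The joint possibility distribution is $\pi(\pmb{a})=\min\{\pi_{\tilde a_1}(a_1),\dots,\pi_{\tilde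 a_n}(a_n),\pi_{\tilde\delta}(\delta(\pmb{a}))\}$ for $\pmb{a}\in\mathbb{R}^n$. For $\lambda\in[0,1]$, $\mathcal{C}(\lambda)=\{\pmb{a}\in\mathbb{R}^n:\ a_j\in[\underline a_j(\lambda),\overline a_j(\lambda)]\ \forall j\in[n],\ \|\pmb{B}(\pmb{a}-\hat{\pmb{a}})\|_2\le\overline\delta(\lambda)\}$; for $\lambda\in(0,1]$ this equals $\{\pmb{a}:\pi(\pmb{a})\ge\lambda\}$. $\mathcal{PM}(\mathbb{R}^n)$ is the set of Borel probability measures on $\mathbb{R}^n$. *)

theory Defs
  imports "HOL-Probability.Probability"
begin

definition g_rho :: "real \<Rightarrow> real \<Rightarrow> real" where
  "g_rho \<rho> z = (1 - \<rho> powr z) / (1 - \<rho>)"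

definition lcut :: "(real \<Rightarrow> real) \<Rightarrow> real \<Rightarrow> real \<Rightarrow> real \<Rightarrow> real" where
  "lcut p ahat lw lam = (if lam = 0 then ahat - lw else Inf {t. p t \<ge> lam})"

definition ucut :: "(real \<Rightarrow> real) \<Rightarrow> real \<Rightarrow> real \<Rightarrow> real \<Rightarrow> real" where
  "ucut p ahat uw lam = (if lam = 0 then ahat + uw else Sup {t. p t \<ge> lam})"

definition dcut :: "(real \<Rightarrow> real) \<Rightarrow> real \<Rightarrow> real \<Rightarrow> real" where
  "dcut pd \<Gamma> lam = (if lam = 0 then \<Gamma> else Sup {t. t \<ge> 0 \<and> pd t \<ge> lam})"

definition Cset :: "('n::finite \<Rightarrow> real \<Rightarrow> real) \<Rightarrow> real^'n \<Rightarrow> real^'n \<Rightarrow> real^'n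
    \<Rightarrow> (real \<Rightarrow> real) \<Rightarrow> real \<Rightarrow> real^'n^'n \<Rightarrow> real \<Rightarrow> (real^'n) set" where
  "Cset pa ahat lw uw pd \<Gamma> B lam =
     {a. (\<forall>j. lcut (pa j) (ahat $ j) (lw $ j) lam \<le> a $ j \<and> a $ j \<le> ucut (pa j) (ahat $ j) (uw $ j) lam)
         \<and> norm (B *v (a - ahat)) \<le> dcut pd \<Gamma> lam}"

definition PM :: "('n::finite) itself \<Rightarrow> (real^'n) measure set" where
  "PM _ = {P. sets P = sets borel \<and> prob_space P}"

definition Pset :: "nat \<Rightarrow> real \<Rightarrow> ('n::finite \<Rightarrow> real \<Rightarrow> real) \<Rightarrow> real^'n \<Rightarrow> real^'n \<Rightarrow> real^'n
    \<Rightarrow> (real \<Rightarrow> real) \<Rightarrow> real \<Rightarrow> real^'n^'n \<Rightarrow> (real^'n) measure set" where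
  "Pset l \<rho> pa ahat lw uw pd \<Gamma> B =
     {P \<in> PM TYPE('n). \<forall>i\<le>l. measure P (Cset pa ahat lw uw pd \<Gamma> B (real i / real l))
                              \<ge> 1 - g_rho \<rho> (real i / real l)}"

end

theory Submission
  imports Defs
begin

lemma colB_sum: "column j B \<bullet> u = (\<Sum>i\<in>UNIV. B $ i $ j * u $ i)"
  by (simp add: column_def inner_vec_def mult.commute)

lemma Bv_inner: "(B *v y) \<bullet> (u::real^'n) = (\<Sum>j\<in>UNIV. y $ j * (column j B \<bullet> u))"
proof -
  have "(B *v y) \<bullet> u = (\<Sum>i\<in>UNIV. (\<Sum>j\<in>UNIV. B $ i $ j * y $ j) * u $ i)"
    by (simp add: inner_vec_def matrix_vector_mult_def)
  also have "\<dots> = (\<Sum>i\<in>UNIV. \<Sum>j\<in>UNIV. y $ j * (B $ i $ j * u $ i))"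
    by (simp add: sum_distrib_left sum_distrib_right mult_ac)
  also have "\<dots> = (\<Sum>j\<in>UNIV. \<Sum>i\<in>UNIV. y $ j * (B $ i $ j * u $ i))"
    by (rule sum.swap)
  also have "\<dots> = (\<Sum>j\<in>UNIV. y $ j * (column j B \<bullet> u))"
    by (simp add: colB_sum sum_distrib_left)
  finally show ?thesis .
qed
lemma weak_bound:
  fixes a ahat x u :: "real^'n" and B :: "real^'n^'n"
  assumes box: "\<forall>j. lo j \<le> a $ j \<and> a $ j \<le> hi j"
    and nb: "norm (B *v (a - ahat)) \<le> D"
    and nn: "\<forall>j. \<alpha> j \<ge> 0 \<and> \<beta> j \<ge> 0"
    and eq: "\<forall>j. \<alpha> j - \<beta> j + column j B \<bullet> u = x $ j"
    and nu: "norm u \<le> \<gamma>"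
  shows "a \<bullet> x \<le> \<gamma> * D + (\<Sum>j\<in>UNIV. \<alpha> j * (hi j - ahat $ j))
           + (\<Sum>j\<in>UNIV. \<beta> j * (ahat $ j - lo j)) + ahat \<bullet> x"
proof -
  define y where "y = a - ahat"
  have "a \<bullet> x = ahat \<bullet> x + y \<bullet> x" by (simp add: y_def inner_diff_left)
  also have "y \<bullet> x = (\<Sum>j\<in>UNIV. y $ j * (\<alpha> j - \<beta> j)) + (B *v y) \<bullet> u"
  proof -
    have "y \<bullet> x = (\<Sum>j\<in>UNIV. y $ j * x $ j)" by (simp add: inner_vec_def)
    also have "\<dots> = (\<Sum>j\<in>UNIV. y $ j * (\<alpha> j - \<beta> j) + y $ j * (column j B \<bullet> u))"
    proof (rule sum.cong[OF refl])
      fix j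
      have "x $ j = (\<alpha> j - \<beta> j) + column j B \<bullet> u" using eq by simp
      then show "y $ j * x $ j = y $ j * (\<alpha> j - \<beta> j) + y $ j * (column j B \<bullet> u)"
        by (simp only: distrib_left)
    qed
    also have "\<dots> = (\<Sum>j\<in>UNIV. y $ j * (\<alpha> j - \<beta> j)) + (\<Sum>j\<in>UNIV. y $ j * (column j B \<bullet> u))"
      by (rule sum.distrib)
    also have "(\<Sum>j\<in>UNIV. y $ j * (column j B \<bullet> u)) = (B *v y) \<bullet> u" by (rule Bv_inner[symmetric])
    finally show ?thesis .
  qed
  also have "(B *v y) \<bullet> u \<le> norm (B *v y) * norm u" by (rule norm_cauchy_schwarz)
  also have "\<dots> \<le> D * \<gamma>"
  proof -
    have "0 \<le> D" using nb norm_ge_zero order_trans by blast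
    then show ?thesis using nb nu by (intro mult_mono) (auto simp: y_def)
  qed
  also have "(\<Sum>j\<in>UNIV. y $ j * (\<alpha> j - \<beta> j)) \<le> (\<Sum>j\<in>UNIV. \<alpha> j * (hi j - ahat $ j) + \<beta> j * (ahat $ j - lo j))"
  proof (rule sum_mono)
    fix j
    have "y $ j * \<alpha> j \<le> (hi j - ahat $ j) * \<alpha> j" using box nn by (intro mult_right_mono) (auto simp: y_def)
    moreover have "- y $ j * \<beta> j \<le> (ahat $ j - lo j) * \<beta> j" using box nn by (intro mult_right_mono) (auto simp: y_def)
    ultimately show "y $ j * (\<alpha> j - \<beta> j) \<le> \<alpha> j * (hi j - ahat $ j) + \<beta> j * (ahat $ j - lo j)"
      by (simp add: algebra_simps)
  qed
  finally have "a \<bullet> x \<le> ahat \<bullet> x + ((\<Sum>j\<in>UNIV. \<alpha> j * (hi j - ahat $ j) + \<beta> j * (ahat $ j - lo j)) + D * \<gamma>)"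
    by simp
  then show ?thesis by (simp add: sum.distrib mult.commute)
qed

lemma convex_boxY: "convex {y::real^'n. \<forall>j. l j \<le> y $ j \<and> y $ j \<le> h j}"
  unfolding convex_def
proof (intro ballI allI impI, safe)
  fix x y :: "real^'n" and u v :: real and j
  assume x: "\<forall>j. l j \<le> x $ j \<and> x $ j \<le> h j" and y: "\<forall>j. l j \<le> y $ j \<and> y $ j \<le> h j"
    and u: "0 \<le> u" and v: "0 \<le> v" and uv: "u + v = 1"
  have "u * l j + v * l j \<le> u * x $ j + v * y $ j"
    using x y u v by (intro add_mono mult_left_mono) auto
  then show "l j \<le> (u *\<^sub>R x + v *\<^sub>R y) $ j" using uv by (simp add: distrib_right[symmetric])
  have "u * x $ j + v * y $ j \<le> u * h j + v * h j"
    using x y u v by (intro add_mono mult_left_mono) auto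
  then show "(u *\<^sub>R x + v *\<^sub>R y) $ j \<le> h j" using uv by (simp add: distrib_right[symmetric])
qed

lemma strong_dual:
  fixes ahat x :: "real^'n" and B :: "real^'n^'n"
  assumes D: "D > 0" and bx: "\<forall>j. lo j \<le> ahat $ j \<and> ahat $ j \<le> hi j"
    and S: "\<forall>a. (\<forall>j. lo j \<le> a $ j \<and> a $ j \<le> hi j) \<and> norm (B *v (a - ahat)) \<le> D \<longrightarrow> a \<bullet> x \<le> S"
  shows "\<exists>\<alpha> \<beta> \<gamma> u. (\<forall>j. \<alpha> j \<ge> 0 \<and> \<beta> j \<ge> 0) \<and> (\<forall>j. \<alpha> j - \<beta> j + column j B \<bullet> u = x $ j)
     \<and> norm u \<le> \<gamma> \<and> \<gamma> * D + (\<Sum>j\<in>UNIV. \<alpha> j * (hi j - ahat $ j))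
           + (\<Sum>j\<in>UNIV. \<beta> j * (ahat $ j - lo j)) + ahat \<bullet> x \<le> S"
proof -
  define S' where "S' = S - ahat \<bullet> x"
  define Y where "Y = {y::real^'n. \<forall>j. lo j - ahat $ j \<le> y $ j \<and> y $ j \<le> hi j - ahat $ j}"
  define f where "f = (\<lambda>(y::real^'n, z::real^'n). (B *v y - z, y \<bullet> x))"
  define SS where "SS = f ` (Y \<times> cball 0 D)"
  define TT where "TT = (({0} \<times> {S'<..}) :: ((real^'n) \<times> real) set)"
  have Y0: "0 \<in> Y" using bx by (auto simp: Y_def)
  have lin: "linear f"
    unfolding f_def by (rule linearI) (auto simp: matrix_vector_right_distrib inner_add_left
        matrix_vector_mult_scaleR algebra_simps)
  have cS: "convex SS" unfolding SS_def
    by (intro convex_linear_image lin convex_Times convex_cball) (simp add: Y_def convex_boxY)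
  have cT: "convex TT" unfolding TT_def by (intro convex_Times convex_singleton convex_real_interval)
  have neS: "SS \<noteq> {}" using Y0 D by (auto simp: SS_def)
  have neT: "TT \<noteq> {}" by (auto simp: TT_def)
  have disj: "SS \<inter> TT = {}"
  proof (rule ccontr)
    assume "SS \<inter> TT \<noteq> {}"
    then obtain y z where y: "y \<in> Y" and z: "norm z \<le> D" and e: "B *v y - z = 0" and r: "y \<bullet> x > S'"
      by (fastforce simp: SS_def TT_def f_def)
    have b1: "\<forall>j. lo j \<le> (ahat + y) $ j \<and> (ahat + y) $ j \<le> hi j" using y
      by (auto simp: Y_def algebra_simps)
    have b2: "norm (B *v ((ahat + y) - ahat)) \<le> D" using z e by simp
    have "(ahat + y) \<bullet> x \<le> S" using S b1 b2 by blast
    then show False using r by (simp add: S'_def inner_add_left)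
  qed
  obtain p c where p0: "p \<noteq> 0" and pS: "\<forall>q\<in>SS. p \<bullet> q \<le> c" and pT: "\<forall>q\<in>TT. p \<bullet> q \<ge> c"
    using separating_hyperplane_sets[OF cS cT neS neT disj] by blast
  obtain u0 \<mu> where p: "p = (u0, \<mu>)" by (cases p)
  have T': "\<And>r. r > S' \<Longrightarrow> \<mu> * r \<ge> c" using pT p by (auto simp: TT_def)
  have S'': "\<And>y (z::real^'n). y \<in> Y \<Longrightarrow> norm z \<le> D \<Longrightarrow> u0 \<bullet> (B *v y - z) + \<mu> * (y \<bullet> x) \<le> c"
    using pS p by (auto simp: SS_def f_def)
  have mu: "\<mu> \<ge> 0"
  proof (rule ccontr)
    assume m: "\<not> \<mu> \<ge> 0"
    define r1 where "r1 = S' + 1"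
    define K where "K = (\<bar>c\<bar> + \<bar>\<mu> * r1\<bar> + 1) / (- \<mu>)"
    have "\<mu> * (r1 + K) = \<mu> * r1 - (\<bar>c\<bar> + \<bar>\<mu> * r1\<bar> + 1)"
      using m by (simp add: K_def field_simps)
    moreover have "K > 0" unfolding K_def using m by (intro divide_pos_pos) auto
    then have "\<mu> * (r1 + K) \<ge> c" by (intro T') (simp add: r1_def)
    ultimately show False by linarith
  qed
  have cmu: "c \<le> \<mu> * S'"
  proof (cases "\<mu> = 0")
    case True
    then show ?thesis using T'[of "S' + 1"] by simp
  next
    case False
    then have mp: "\<mu> > 0" using mu by simp
    show ?thesis
    proof (rule field_le_epsilon)
      fix e :: real assume e: "e > 0"
      have "c \<le> \<mu> * (S' + e / \<mu>)" using e mp by (intro T') simp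
      moreover have "\<mu> * (S' + e / \<mu>) = \<mu> * S' + e" using mp by (simp add: field_simps)
      ultimately show "c \<le> \<mu> * S' + e" by linarith
    qed
  qed
  have mpos: "\<mu> > 0"
  proof (rule ccontr)
    assume "\<not> \<mu> > 0"
    then have m0: "\<mu> = 0" using mu by simp
    then have u0: "u0 \<noteq> 0" using p0 p by (auto simp: zero_prod_def)
    define z where "z = - (D / norm u0) *\<^sub>R u0"
    have nz: "norm z = D" using u0 D by (simp add: z_def)
    have "u0 \<bullet> (B *v 0 - z) = (D / norm u0) * (u0 \<bullet> u0)"
      by (simp add: z_def)
    also have "u0 \<bullet> u0 = norm u0 * norm u0" by (simp add: dot_square_norm power2_eq_square)
    also have "(D / norm u0) * (norm u0 * norm u0) = D * norm u0" using u0 by simp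
    finally have "u0 \<bullet> (B *v 0 - z) = D * norm u0" .
    then have "D * norm u0 \<le> c" using S''[OF Y0, of z] nz m0 by simp
    moreover have "D * norm u0 > 0" using D u0 by simp
    ultimately show False using cmu m0 by simp
  qed
  define u where "u = - (1 / \<mu>) *\<^sub>R u0"
  have key: "\<And>y (z::real^'n). y \<in> Y \<Longrightarrow> norm z \<le> D \<Longrightarrow> y \<bullet> x - u \<bullet> (B *v y) + u \<bullet> z \<le> S'"
  proof -
    fix y and z :: "real^'n" assume y: "y \<in> Y" and z: "norm z \<le> D"
    have "u0 \<bullet> (B *v y - z) + \<mu> * (y \<bullet> x) \<le> \<mu> * S'" using S''[OF y z] cmu by simp
    then have "(u0 \<bullet> (B *v y - z) + \<mu> * (y \<bullet> x)) / \<mu> \<le> S'" using mpos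
      by (simp add: divide_le_eq mult.commute)
    then show "y \<bullet> x - u \<bullet> (B *v y) + u \<bullet> z \<le> S'"
      using mpos by (simp add: u_def inner_diff_right add_divide_distrib diff_divide_distrib algebra_simps)
  qed
  define d where "d = (\<lambda>j. x $ j - column j B \<bullet> u)"
  define \<alpha> where "\<alpha> = (\<lambda>j. max (d j) 0)"
  define \<beta> where "\<beta> = (\<lambda>j. max (- d j) 0)"
  define y where "y = (\<chi> j. if d j \<ge> 0 then hi j - ahat $ j else lo j - ahat $ j)"
  define z where "z = (if u = 0 then 0 else (D / norm u) *\<^sub>R u)"
  have yY: "y \<in> Y" using bx by (auto simp: Y_def y_def intro: order_trans)
  have nz: "norm z \<le> D" using D by (simp add: z_def)
  have uz: "u \<bullet> z = D * norm u"
  proof (cases "u = 0")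
    case False
    have "u \<bullet> z = (D / norm u) * (u \<bullet> u)" using False by (simp add: z_def)
    also have "u \<bullet> u = norm u * norm u" by (simp add: dot_square_norm power2_eq_square)
    finally show ?thesis using False by simp
  qed (simp add: z_def)
  have "u \<bullet> (B *v y) = (B *v y) \<bullet> u" by (rule inner_commute)
  also have "\<dots> = (\<Sum>j\<in>UNIV. y $ j * (column j B \<bullet> u))" by (rule Bv_inner)
  finally have "y \<bullet> x - u \<bullet> (B *v y) = (\<Sum>j\<in>UNIV. y $ j * x $ j) - (\<Sum>j\<in>UNIV. y $ j * (column j B \<bullet> u))"
    by (simp add: inner_vec_def)
  also have "\<dots> = (\<Sum>j\<in>UNIV. y $ j * d j)"
    by (simp add: d_def right_diff_distrib sum_subtractf)
  also have "\<dots> = (\<Sum>j\<in>UNIV. \<alpha> j * (hi j - ahat $ j) + \<beta> j * (ahat $ j - lo j))"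
    by (intro sum.cong) (auto simp: y_def \<alpha>_def \<beta>_def max_def algebra_simps)
  finally have eq1: "y \<bullet> x - u \<bullet> (B *v y) = (\<Sum>j\<in>UNIV. \<alpha> j * (hi j - ahat $ j)) + (\<Sum>j\<in>UNIV. \<beta> j * (ahat $ j - lo j))"
    by (simp add: sum.distrib)
  have "norm u * D + (\<Sum>j\<in>UNIV. \<alpha> j * (hi j - ahat $ j)) + (\<Sum>j\<in>UNIV. \<beta> j * (ahat $ j - lo j)) + ahat \<bullet> x \<le> S"
    using key[OF yY nz] eq1 uz by (simp add: S'_def algebra_simps)
  moreover have "\<forall>j. \<alpha> j - \<beta> j + column j B \<bullet> u = x $ j" by (auto simp: \<alpha>_def \<beta>_def d_def max_def)
  moreover have "\<forall>j. \<alpha> j \<ge> 0 \<and> \<beta> j \<ge> 0" by (auto simp: \<alpha>_def \<beta>_def)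
  ultimately show ?thesis by blast
qed

locale fz =
  fixes p :: "real \<Rightarrow> real" and ah lw uw :: real
  assumes lw: "lw > 0" and uw: "uw > 0" and pk: "p ah = 1"
    and supp: "\<forall>t. t \<notin> {ah - lw <..< ah + uw} \<longrightarrow> p t = 0"
begin

lemma cs_mem: "0 < lam \<Longrightarrow> lam \<le> 1 \<Longrightarrow> ah \<in> {t. p t \<ge> lam}"
  using pk by simp

lemma cs_bnd: "0 < lam \<Longrightarrow> t \<in> {t. p t \<ge> lam} \<Longrightarrow> ah - lw < t \<and> t < ah + uw"
  using supp by (metis greaterThanLessThan_iff linorder_not_le mem_Collect_eq)

lemma cs_bdd_below: "0 < lam \<Longrightarrow> bdd_below {t. p t \<ge> lam}"
  by (rule bdd_belowI[of _ "ah - lw"]) (use cs_bnd in force)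

lemma cs_bdd_above: "0 < lam \<Longrightarrow> bdd_above {t. p t \<ge> lam}"
  by (rule bdd_aboveI[of _ "ah + uw"]) (use cs_bnd in force)

lemma lcut_le: "0 \<le> lam \<Longrightarrow> lam \<le> 1 \<Longrightarrow> lcut p ah lw lam \<le> ah"
  unfolding lcut_def using lw cs_mem cs_bdd_below by (auto intro!: cInf_lower)

lemma ucut_ge: "0 \<le> lam \<Longrightarrow> lam \<le> 1 \<Longrightarrow> ah \<le> ucut p ah uw lam"
  unfolding ucut_def using uw cs_mem cs_bdd_above by (auto intro!: cSup_upper)

lemma lcut_mono: "0 \<le> lam \<Longrightarrow> lam \<le> mu \<Longrightarrow> mu \<le> 1 \<Longrightarrow> lcut p ah lw lam \<le> lcut p ah lw mu"
proof -
  assume a: "0 \<le> lam" "lam \<le> mu" "mu \<le> 1"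
  show ?thesis
  proof (cases "lam = 0")
    case True
    show ?thesis
    proof (cases "mu = 0")
      case False
      then have "mu > 0" using a by simp
      then have "ah - lw \<le> Inf {t. p t \<ge> mu}"
        using cs_mem[of mu] cs_bnd[of mu] a by (intro cInf_greatest) (auto intro: less_imp_le)
      then show ?thesis using True False by (simp add: lcut_def)
    qed (use True in simp)
  next
    case False
    then have "lam > 0" "mu > 0" using a by auto
    then have "Inf {t. p t \<ge> lam} \<le> Inf {t. p t \<ge> mu}"
      using cs_mem[of mu] a by (intro cInf_superset_mono cs_bdd_below) auto
    then show ?thesis using \<open>lam > 0\<close> \<open>mu > 0\<close> by (simp add: lcut_def)
  qed
qed

lemma ucut_mono: "0 \<le> lam \<Longrightarrow> lam \<le> mu \<Longrightarrow> mu \<le> 1 \<Longrightarrow> ucut p ah uw mu \<le> ucut p ah uw lam"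
proof -
  assume a: "0 \<le> lam" "lam \<le> mu" "mu \<le> 1"
  show ?thesis
  proof (cases "lam = 0")
    case True
    show ?thesis
    proof (cases "mu = 0")
      case False
      then have "mu > 0" using a by simp
      then have "Sup {t. p t \<ge> mu} \<le> ah + uw"
        using cs_mem[of mu] cs_bnd[of mu] a by (intro cSup_least) (auto intro: less_imp_le)
      then show ?thesis using True False by (simp add: ucut_def)
    qed (use True in simp)
  next
    case False
    then have "lam > 0" "mu > 0" using a by auto
    then have "Sup {t. p t \<ge> mu} \<le> Sup {t. p t \<ge> lam}"
      using cs_mem[of mu] a by (intro cSup_subset_mono cs_bdd_above) auto
    then show ?thesis using \<open>lam > 0\<close> \<open>mu > 0\<close> by (simp add: ucut_def)
  qed
qed

lemma cut_one:
  assumes rng: "\<forall>t. p t \<le> 1"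
    and inc: "strict_mono_on {ah - lw .. ah} p"
    and dec: "strict_antimono_on {ah .. ah + uw} p"
  shows "lcut p ah lw 1 = ah" "ucut p ah uw 1 = ah"
proof -
  have "{t. p t \<ge> 1} = {ah}"
  proof safe
    fix t assume t: "1 \<le> p t"
    show "t = ah"
    proof (rule ccontr)
      assume ne: "t \<noteq> ah"
      have "ah - lw < t \<and> t < ah + uw" using cs_bnd[of 1 t] t by simp
      then have "p t < p ah"
      proof (cases "t < ah")
        case True
        then show ?thesis using inc \<open>ah - lw < t \<and> t < ah + uw\<close> lw
          by (auto simp: strict_mono_on_def)
      next
        case False
        then have "ah < t" using ne by simp
        then show ?thesis using dec \<open>ah - lw < t \<and> t < ah + uw\<close> uw
          by (auto simp: monotone_on_def)
      qed
      then show False using t pk by simp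
    qed
  qed (use pk in simp)
  then show "lcut p ah lw 1 = ah" "ucut p ah uw 1 = ah" by (simp_all add: lcut_def ucut_def)
qed

end

locale dz =
  fixes pd :: "real \<Rightarrow> real" and G :: real
  assumes G: "G > 0" and pd0: "pd 0 = 1" and dsupp: "\<forall>t\<ge>G. pd t = 0"
begin

lemma ds_mem: "lam \<le> 1 \<Longrightarrow> 0 \<in> {t. t \<ge> 0 \<and> pd t \<ge> lam}" using pd0 by simp

lemma ds_bnd: "0 < lam \<Longrightarrow> t \<in> {t. t \<ge> 0 \<and> pd t \<ge> lam} \<Longrightarrow> t < G"
  using dsupp by (metis linorder_not_le mem_Collect_eq)

lemma ds_bdd: "0 < lam \<Longrightarrow> bdd_above {t. t \<ge> 0 \<and> pd t \<ge> lam}"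
  by (rule bdd_aboveI[of _ G]) (use ds_bnd in force)

lemma dcut_nonneg: "0 \<le> lam \<Longrightarrow> lam \<le> 1 \<Longrightarrow> 0 \<le> dcut pd G lam"
  unfolding dcut_def using G ds_mem ds_bdd by (auto intro!: cSup_upper)

lemma dcut_mono: "0 \<le> lam \<Longrightarrow> lam \<le> mu \<Longrightarrow> mu \<le> 1 \<Longrightarrow> dcut pd G mu \<le> dcut pd G lam"
proof -
  assume a: "0 \<le> lam" "lam \<le> mu" "mu \<le> 1"
  show ?thesis
  proof (cases "lam = 0")
    case True
    show ?thesis
    proof (cases "mu = 0")
      case False
      then have "mu > 0" using a by simp
      then have "Sup {t. t \<ge> 0 \<and> pd t \<ge> mu} \<le> G"
        using ds_mem[of mu] ds_bnd[of mu] a by (intro cSup_least) (auto intro: less_imp_le)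
      then show ?thesis using True False by (simp add: dcut_def)
    qed (use True in simp)
  next
    case False
    then have "lam > 0" "mu > 0" using a by auto
    then have "Sup {t. t \<ge> 0 \<and> pd t \<ge> mu} \<le> Sup {t. t \<ge> 0 \<and> pd t \<ge> lam}"
      using ds_mem[of mu] a by (intro cSup_subset_mono ds_bdd) auto
    then show ?thesis using \<open>lam > 0\<close> \<open>mu > 0\<close> by (simp add: dcut_def)
  qed
qed

lemma dcut_pos:
  assumes cont: "continuous_on {0..} pd" and a: "0 \<le> lam" "lam < 1"
  shows "0 < dcut pd G lam"
proof (cases "lam = 0")
  case True then show ?thesis using G by (simp add: dcut_def)
next
  case False
  then have lp: "lam > 0" using a by simp
  have "continuous (at 0 within {0..}) pd" using cont by (simp add: continuous_on_eq_continuous_within)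
  then obtain d where d: "d > 0" and dd: "\<And>t. t \<in> {0..} \<Longrightarrow> dist t 0 < d \<Longrightarrow> dist (pd t) (pd 0) < 1 - lam"
    using a unfolding continuous_within_eps_delta by (metis diff_gt_0_iff_gt)
  have "dist (pd (d/2)) (pd 0) < 1 - lam" using d by (intro dd) auto
  then have "pd (d/2) \<ge> lam" using pd0 by (simp add: dist_real_def abs_if split: if_splits)
  then have "d/2 \<le> Sup {t. t \<ge> 0 \<and> pd t \<ge> lam}" using d lp by (intro cSup_upper ds_bdd) auto
  then show ?thesis using d False by (simp add: dcut_def)
qed

end

lemma telesc_if: "(\<Sum>i\<le>n. if k \<le> i then f i - f (Suc i) else 0) = (if k \<le> n then f k - f (Suc n) else (0::real))"
  by (induct n) (auto simp: le_Suc_eq)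

lemma abel_sum:
  assumes "v 0 = 0" "\<And>k. v (Suc k) = S k - S (Suc k)"
  shows "(\<Sum>i\<le>n. (P i - P (Suc i)) * S i) = P 0 * S 0 - (\<Sum>k\<le>n. P k * v k) - P (Suc n) * (S n :: real)"
  by (induct n) (simp_all add: assms algebra_simps)

lemma telesc_v:
  assumes "v 0 = 0" "\<And>k. v (Suc k) = S k - S (Suc k)"
  shows "S 0 - (\<Sum>k\<le>i. v k) = (S i :: real)"
  by (induct i) (simp_all add: assms)

lemma filter_upt_eq: "filter (\<lambda>k. k = i) [0..<n] = (if i < n then [i] else [])"
  by (induct n) auto

theorem mainTheorem9:
  fixes pa :: "'n::finite \<Rightarrow> real \<Rightarrow> real"
    and ahat lw uw :: "real^'n"
    and pd :: "real \<Rightarrow> real" and \<Gamma> :: real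
    and B :: "real^'n^'n"
    and \<rho> :: real and l :: nat
    and x :: "real^'n" and b :: real
  assumes lw_pos: "\<forall>j. lw $ j > 0" and uw_pos: "\<forall>j. uw $ j > 0"
    and pa_cont: "\<forall>j. continuous_on UNIV (pa j)"
    and pa_range: "\<forall>j t. 0 \<le> pa j t \<and> pa j t \<le> 1"
    and pa_peak: "\<forall>j. pa j (ahat $ j) = 1"
    and pa_supp: "\<forall>j t. t \<notin> {ahat $ j - lw $ j <..< ahat $ j + uw $ j} \<longrightarrow> pa j t = 0"
    and pa_inc: "\<forall>j. strict_mono_on {ahat $ j - lw $ j .. ahat $ j} (pa j)"
    and pa_dec: "\<forall>j. strict_antimono_on {ahat $ j .. ahat $ j + uw $ j} (pa j)"
    and Gamma_pos: "\<Gamma> > 0"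
    and pd_cont: "continuous_on {0..} pd"
    and pd_range: "\<forall>t\<ge>0. 0 \<le> pd t \<and> pd t \<le> 1"
    and pd_zero: "pd 0 = 1"
    and pd_dec: "strict_antimono_on {0..\<Gamma>} pd"
    and pd_supp: "\<forall>t\<ge>\<Gamma>. pd t = 0"
    and rho: "0 < \<rho>" "\<rho> < 1"
    and l: "l \<ge> 1"
  shows "(SUP P \<in> Pset l \<rho> pa ahat lw uw pd \<Gamma> B. ereal (integral\<^sup>L P (\<lambda>a. a \<bullet> x))) \<le> ereal b
    \<longleftrightarrow>
    (\<exists>(w::real) (v::nat \<Rightarrow> real) (\<gamma>::nat \<Rightarrow> real) (u::nat \<Rightarrow> real^'n) (\<alpha>::nat \<Rightarrow> 'n \<Rightarrow> real) (\<beta>::nat \<Rightarrow> 'n \<Rightarrow> real).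
       (\<forall>i\<le>l. v i \<ge> 0 \<and> \<gamma> i \<ge> 0 \<and> (\<forall>j. \<alpha> i j \<ge> 0 \<and> \<beta> i j \<ge> 0)) \<and>
       w + (\<Sum>i\<le>l. (g_rho \<rho> (real i / real l) - 1) * v i) \<le> b \<and>
       (\<forall>i\<le>l. \<gamma> i * dcut pd \<Gamma> (real i / real l)
                + (\<Sum>j\<in>UNIV. \<alpha> i j * (ucut (pa j) (ahat $ j) (uw $ j) (real i / real l) - ahat $ j))
                + (\<Sum>j\<in>UNIV. \<beta> i j * (ahat $ j - lcut (pa j) (ahat $ j) (lw $ j) (real i / real l)))
                + ahat \<bullet> x
              \<le> w - (\<Sum>k\<le>i. v k)) \<and>
       (\<forall>i\<le>l. \<forall>j. \<alpha> i j - \<beta> i j + column j B \<bullet> u i = x $ j) \<and>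
       (\<forall>i\<le>l. norm (u i) \<le> \<gamma> i))"
proof -
  define lam :: "nat \<Rightarrow> real" where "lam i = real i / real l" for i
  have lam: "0 \<le> lam i \<and> lam i \<le> 1" if "i \<le> l" for i
    using that l by (simp add: lam_def divide_le_eq_1)
  have lam_mono: "lam i \<le> lam k" if "i \<le> k" for i k
    using that by (simp add: lam_def divide_right_mono)
  have lam_l: "lam l = 1" using l by (simp add: lam_def)
  have lam_lt: "lam i < 1" if "i < l" for i using that by (simp add: lam_def)
  have lam0: "lam 0 = 0" by (simp add: lam_def)
  define lo where "lo i j = lcut (pa j) (ahat $ j) (lw $ j) (lam i)" for i j
  define hi where "hi i j = ucut (pa j) (ahat $ j) (uw $ j) (lam i)" for i j
  define D where "D i = dcut pd \<Gamma> (lam i)" for i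
  define C where "C i = Cset pa ahat lw uw pd \<Gamma> B (lam i)" for i
  have Cmem: "a \<in> C i \<longleftrightarrow> (\<forall>j. lo i j \<le> a $ j \<and> a $ j \<le> hi i j) \<and> norm (B *v (a - ahat)) \<le> D i" for i a
    by (simp add: C_def Cset_def lo_def hi_def D_def)
  have fzj: "fz (pa j) (ahat $ j) (lw $ j) (uw $ j)" for j
    using lw_pos uw_pos pa_peak pa_supp by unfold_locales auto
  have dzz: "dz pd \<Gamma>" using Gamma_pos pd_zero pd_supp by unfold_locales auto
  have lohi: "lo i j \<le> ahat $ j \<and> ahat $ j \<le> hi i j" if "i \<le> l" for i j
    using fz.lcut_le[OF fzj] fz.ucut_ge[OF fzj] lam[OF that] by (simp add: lo_def hi_def)
  have D0: "0 \<le> D i" if "i \<le> l" for i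
    using dz.dcut_nonneg[OF dzz] lam[OF that] by (simp add: D_def)
  have Dpos: "0 < D i" if "i < l" for i
    using dz.dcut_pos[OF dzz pd_cont] lam[of i] lam_lt[OF that] that by (simp add: D_def)
  have hat: "ahat \<in> C i" if "i \<le> l" for i
    using lohi[OF that] D0[OF that] by (simp add: Cmem)
  have nest: "C k \<subseteq> C i" if "i \<le> k" "k \<le> l" for i k
  proof
    fix a assume a: "a \<in> C k"
    have li: "0 \<le> lam i" "lam i \<le> lam k" "lam k \<le> 1" using lam[of i] lam[of k] lam_mono[of i k] that by auto
    have "lo i j \<le> lo k j" "hi k j \<le> hi i j" for j
      using fz.lcut_mono[OF fzj li] fz.ucut_mono[OF fzj li] by (auto simp: lo_def hi_def)
    moreover have "D k \<le> D i" using dz.dcut_mono[OF dzz li] by (simp add: D_def)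
    ultimately show "a \<in> C i" using a unfolding Cmem by (meson order_trans)
  qed
  have lol: "lo l j = ahat $ j" "hi l j = ahat $ j" for j
    using fz.cut_one[OF fzj, of j] pa_range pa_inc pa_dec lam_l by (auto simp: lo_def hi_def)
  have Ceq: "C i = {a. \<forall>j. lo i j \<le> a $ j \<and> a $ j \<le> hi i j} \<inter> {a. norm (B *v a - B *v ahat) \<le> D i}" for i
    by (auto simp: Cmem matrix_vector_mult_diff_distrib)
  have Cclosed: "closed (C i)" for i
    unfolding Ceq
    by (intro closed_Int closed_Collect_all closed_Collect_conj closed_Collect_le continuous_intros)
  have Cbdd: "bounded (C i)" for i
  proof -
    have "C i \<subseteq> cbox (\<chi> j. lo i j) (\<chi> j. hi i j)" by (auto simp: Cmem mem_box_cart)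
    then show ?thesis by (rule bounded_subset[OF bounded_cbox])
  qed
  have Ccomp: "compact (C i)" for i using Cclosed Cbdd by (simp add: compact_eq_bounded_closed)
  have Cmeas: "C i \<in> sets borel" for i using Cclosed by (rule borel_closed)
  have "\<forall>i\<in>{..l}. \<exists>a\<in>C i. \<forall>c\<in>C i. c \<bullet> x \<le> a \<bullet> x"
  proof
    fix i assume "i \<in> {..l}"
    then have "C i \<noteq> {}" using hat by auto
    then show "\<exists>a\<in>C i. \<forall>c\<in>C i. c \<bullet> x \<le> a \<bullet> x"
      using Ccomp by (intro continuous_attains_sup continuous_intros)
  qed
  then have "\<forall>i\<in>{..l}. \<exists>a. a \<in> C i \<and> (\<forall>c\<in>C i. c \<bullet> x \<le> a \<bullet> x)" by blast
  then obtain A where A: "\<forall>i\<in>{..l}. A i \<in> C i \<and> (\<forall>c\<in>C i. c \<bullet> x \<le> A i \<bullet> x)"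
    using bchoice[of "{..l}" "\<lambda>i a. a \<in> C i \<and> (\<forall>c\<in>C i. c \<bullet> x \<le> a \<bullet> x)"] by blast
  have AC: "\<And>i. i \<le> l \<Longrightarrow> A i \<in> C i" and Amax: "\<And>i c. i \<le> l \<Longrightarrow> c \<in> C i \<Longrightarrow> c \<bullet> x \<le> A i \<bullet> x"
    using A by auto
  define cert where "cert i \<alpha> \<beta> \<gamma> u \<longleftrightarrow> (\<forall>j. \<alpha> j \<ge> 0 \<and> \<beta> j \<ge> 0) \<and> (\<forall>j. \<alpha> j - \<beta> j + column j B \<bullet> u = x $ j)
     \<and> norm u \<le> \<gamma> \<and> \<gamma> * D i + (\<Sum>j\<in>UNIV. \<alpha> j * (hi i j - ahat $ j))
           + (\<Sum>j\<in>UNIV. \<beta> j * (ahat $ j - lo i j)) + ahat \<bullet> x \<le> A i \<bullet> x"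
    for i \<alpha> \<beta> \<gamma> u
  have "\<forall>i\<in>{..l}. \<exists>\<alpha> \<beta> \<gamma> u. cert i \<alpha> \<beta> \<gamma> u"
  proof
    fix i assume i: "i \<in> {..l}"
    show "\<exists>\<alpha> \<beta> \<gamma> u. cert i \<alpha> \<beta> \<gamma> u"
    proof (cases "i = l")
      case True
      have "cert i (\<lambda>j. max (x $ j) 0) (\<lambda>j. max (- x $ j) 0) 0 0"
        using True hat[of l] Amax[of l ahat] by (simp add: cert_def lol max_def)
      then show ?thesis by blast
    next
      case False
      then have il: "i < l" using i by simp
      have S: "\<forall>a. (\<forall>j. lo i j \<le> a $ j \<and> a $ j \<le> hi i j) \<and> norm (B *v (a - ahat)) \<le> D i \<longrightarrow> a \<bullet> x \<le> A i \<bullet> x"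
        using Amax[of i] il by (auto simp: Cmem)
      show ?thesis using strong_dual[OF Dpos[OF il] _ S] lohi[of i] il unfolding cert_def by auto
    qed
  qed
  from bchoice[OF this] obtain \<alpha> where "\<forall>i\<in>{..l}. \<exists>\<beta> \<gamma> u. cert i (\<alpha> i) \<beta> \<gamma> u" by blast
  from bchoice[OF this] obtain \<beta> where "\<forall>i\<in>{..l}. \<exists>\<gamma> u. cert i (\<alpha> i) (\<beta> i) \<gamma> u" by blast
  from bchoice[OF this] obtain \<gamma> where "\<forall>i\<in>{..l}. \<exists>u. cert i (\<alpha> i) (\<beta> i) (\<gamma> i) u" by blast
  from bchoice[OF this] obtain u where cer0: "\<forall>i\<in>{..l}. cert i (\<alpha> i) (\<beta> i) (\<gamma> i) (u i)" by blast
  have cer: "\<And>i. i \<le> l \<Longrightarrow> cert i (\<alpha> i) (\<beta> i) (\<gamma> i) (u i)" using cer0 by auto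
  have g0: "g_rho \<rho> 0 = 0" using rho by (simp add: g_rho_def)
  have g1: "g_rho \<rho> 1 = 1" using rho by (simp add: g_rho_def)
  have gmono: "g_rho \<rho> s \<le> g_rho \<rho> t" if "s \<le> t" for s t
    using rho that by (auto simp: g_rho_def intro!: divide_right_mono powr_mono')
  show ?thesis
  proof
    assume sup: "(SUP P \<in> Pset l \<rho> pa ahat lw uw pd \<Gamma> B. ereal (integral\<^sup>L P (\<lambda>a. a \<bullet> x))) \<le> ereal b"
    define S where "S i = A i \<bullet> x" for i
    define v where "v k = (if k = 0 then 0 else S (k - 1) - S k)" for k
    have v0: "v 0 = 0" and vS: "\<And>k. v (Suc k) = S k - S (Suc k)" by (simp_all add: v_def)
    have vnn: "v k \<ge> 0" if "k \<le> l" for k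
    proof (cases k)
      case (Suc k')
      then have "A k \<in> C k'" using nest[of k' k] AC[of k] that by auto
      then show ?thesis using Amax[of k' "A k"] Suc that by (simp add: v_def S_def)
    qed (simp add: v_def)
    define Pw where "Pw i = (if i \<le> l then 1 - g_rho \<rho> (lam i) else 0)" for i
    define q where "q i = Pw i - Pw (Suc i)" for i
    have Pwl: "Pw (Suc l) = 0" "Pw 0 = 1" by (simp_all add: Pw_def lam0 g0)
    have qnn: "q i \<ge> 0" for i
    proof -
      consider "Suc i \<le> l" | "i = l" | "i > l" by linarith
      then show ?thesis
      proof cases
        case 1 then show ?thesis using gmono[OF lam_mono[of i "Suc i"]] by (simp add: q_def Pw_def)
      next
        case 2 then show ?thesis by (simp add: q_def Pw_def lam_l g1)
      qed (simp add: q_def Pw_def)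
    qed
    have qsum: "(\<Sum>i\<le>l. q i) = 1" using telesc_if[where k=0 and n=l and f=Pw] Pwl by (simp add: q_def)
    define xs where "xs = map (\<lambda>i. (i, q i)) [0..<Suc l]"
    have wf: "pmf_of_list_wf xs"
    proof (rule pmf_of_list_wfI)
      show "\<And>y. y \<in> set (map snd xs) \<Longrightarrow> 0 \<le> y" using qnn by (auto simp: xs_def)
      have "sum_list (map snd xs) = sum_list (map q [0..<Suc l])"
        by (simp add: xs_def o_def del: upt_Suc)
      also have "\<dots> = sum q (set [0..<Suc l])" by (rule sum_set_upt_conv_sum_list_nat[symmetric])
      also have "set [0..<Suc l] = {0..<Suc l}" by (rule set_upt)
      also have "{0..<Suc l} = {..l}" by auto
      also have "sum q {..l} = 1" by (rule qsum)
      finally show "sum_list (map snd xs) = 1" .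
    qed
    define pq where "pq = pmf_of_list xs"
    have pmfq: "pmf pq i = (if i \<le> l then q i else 0)" for i
    proof -
      have "pmf pq i = sum_list (map snd (filter (\<lambda>z. fst z = i) xs))"
        unfolding pq_def by (rule pmf_pmf_of_list[OF wf])
      also have "filter (\<lambda>z. fst z = i) xs = map (\<lambda>k. (k, q k)) (filter (\<lambda>k. k = i) [0..<Suc l])"
        by (simp add: xs_def filter_map o_def del: upt_Suc)
      also have "filter (\<lambda>k. k = i) [0..<Suc l] = (if i < Suc l then [i] else [])" by (rule filter_upt_eq)
      finally show ?thesis by auto
    qed
    have setq: "i \<in> set_pmf pq \<Longrightarrow> i \<in> {..l}" for i
      by (auto simp: set_pmf_iff pmfq split: if_splits)
    define M where "M = distr (measure_pmf pq) borel A"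
    have Amb: "A \<in> measurable (measure_pmf pq) borel" by simp
    have intM: "integral\<^sup>L M f = (\<Sum>i\<le>l. f (A i) * q i)" if "f \<in> borel_measurable borel" for f :: "real^'n \<Rightarrow> real"
    proof -
      have "integral\<^sup>L M f = integral\<^sup>L (measure_pmf pq) (\<lambda>i. f (A i))"
        unfolding M_def by (rule integral_distr[OF Amb that])
      also have "\<dots> = (\<Sum>i\<le>l. f (A i) * pmf pq i)"
        by (rule integral_measure_pmf_real) (auto dest: setq)
      finally show ?thesis by (simp add: pmfq)
    qed
    have spM: "space M = UNIV" by (simp add: M_def)
    have MPM: "M \<in> Pset l \<rho> pa ahat lw uw pd \<Gamma> B"
    proof -
      have "sets M = sets borel" by (simp add: M_def)
      moreover have "prob_space M" unfolding M_def by (rule measure_pmf.prob_space_distr[OF Amb])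
      moreover have "measure M (C k) \<ge> 1 - g_rho \<rho> (lam k)" if k: "k \<le> l" for k
      proof -
        have "measure M (C k) = integral\<^sup>L M (indicator (C k))" by (simp add: spM)
        also have "\<dots> = (\<Sum>i\<le>l. indicator (C k) (A i) * q i)"
          by (rule intM) (rule borel_measurable_indicator[OF Cmeas])
        also have "\<dots> \<ge> (\<Sum>i\<le>l. if k \<le> i then q i else 0)"
        proof (rule sum_mono)
          fix i assume i: "i \<in> {..l}"
          show "(if k \<le> i then q i else 0) \<le> indicator (C k) (A i) * q i"
            using nest[of k i] AC[of i] i qnn[of i] by (auto simp: indicator_def)
        qed
        also have "(\<Sum>i\<le>l. if k \<le> i then q i else 0) = 1 - g_rho \<rho> (lam k)"
        proof -
          have "Pw k = 1 - g_rho \<rho> (lam k)" using k by (simp add: Pw_def)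
          then show ?thesis unfolding q_def using telesc_if[where k=k and n=l and f=Pw] k Pwl by simp
        qed
        finally show ?thesis .
      qed
      ultimately show ?thesis by (auto simp: Pset_def PM_def C_def lam_def)
    qed
    have EM: "integral\<^sup>L M (\<lambda>a. a \<bullet> x) = S 0 - (\<Sum>k\<le>l. Pw k * v k)"
    proof -
      have "integral\<^sup>L M (\<lambda>a. a \<bullet> x) = (\<Sum>i\<le>l. (Pw i - Pw (Suc i)) * S i)"
        by (subst intM) (auto simp: S_def q_def mult.commute)
      also have "\<dots> = Pw 0 * S 0 - (\<Sum>k\<le>l. Pw k * v k) - Pw (Suc l) * S l"
        by (rule abel_sum[OF v0 vS])
      finally show ?thesis using Pwl by simp
    qed
    have "ereal (integral\<^sup>L M (\<lambda>a. a \<bullet> x)) \<le> ereal b"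
      using sup MPM by (meson SUP_upper order_trans)
    then have Eb: "S 0 - (\<Sum>k\<le>l. Pw k * v k) \<le> b" using EM by simp
    have "(\<Sum>i\<le>l. (g_rho \<rho> (real i / real l) - 1) * v i) = - (\<Sum>k\<le>l. Pw k * v k)"
      by (simp add: sum_negf[symmetric] Pw_def lam_def algebra_simps)
    then have c2: "S 0 + (\<Sum>i\<le>l. (g_rho \<rho> (real i / real l) - 1) * v i) \<le> b" using Eb by simp
    have c3: "\<gamma> i * dcut pd \<Gamma> (real i / real l)
                + (\<Sum>j\<in>UNIV. \<alpha> i j * (ucut (pa j) (ahat $ j) (uw $ j) (real i / real l) - ahat $ j))
                + (\<Sum>j\<in>UNIV. \<beta> i j * (ahat $ j - lcut (pa j) (ahat $ j) (lw $ j) (real i / real l)))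
                + ahat \<bullet> x
              \<le> S 0 - (\<Sum>k\<le>i. v k)" if i: "i \<le> l" for i
      using cer[OF i] telesc_v[OF v0 vS, of i] by (simp add: cert_def D_def hi_def lo_def lam_def S_def)
    have c1: "v i \<ge> 0 \<and> \<gamma> i \<ge> 0 \<and> (\<forall>j. \<alpha> i j \<ge> 0 \<and> \<beta> i j \<ge> 0)" if i: "i \<le> l" for i
    proof -
      have a: "\<forall>j. \<alpha> i j \<ge> 0 \<and> \<beta> i j \<ge> 0" and b: "norm (u i) \<le> \<gamma> i"
        using cer[OF i] unfolding cert_def by auto
      have "\<gamma> i \<ge> 0" using b norm_ge_zero order_trans by blast
      then show ?thesis using a vnn[OF i] by simp
    qed
    have c4: "\<forall>j. \<alpha> i j - \<beta> i j + column j B \<bullet> u i = x $ j" and c5: "norm (u i) \<le> \<gamma> i" if i: "i \<le> l" for i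
      using cer[OF i] unfolding cert_def by auto
    show "\<exists>(w::real) (v::nat \<Rightarrow> real) (\<gamma>::nat \<Rightarrow> real) (u::nat \<Rightarrow> real^'n) (\<alpha>::nat \<Rightarrow> 'n \<Rightarrow> real) (\<beta>::nat \<Rightarrow> 'n \<Rightarrow> real).
       (\<forall>i\<le>l. v i \<ge> 0 \<and> \<gamma> i \<ge> 0 \<and> (\<forall>j. \<alpha> i j \<ge> 0 \<and> \<beta> i j \<ge> 0)) \<and>
       w + (\<Sum>i\<le>l. (g_rho \<rho> (real i / real l) - 1) * v i) \<le> b \<and>
       (\<forall>i\<le>l. \<gamma> i * dcut pd \<Gamma> (real i / real l)
                + (\<Sum>j\<in>UNIV. \<alpha> i j * (ucut (pa j) (ahat $ j) (uw $ j) (real i / real l) - ahat $ j))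
                + (\<Sum>j\<in>UNIV. \<beta> i j * (ahat $ j - lcut (pa j) (ahat $ j) (lw $ j) (real i / real l)))
                + ahat \<bullet> x
              \<le> w - (\<Sum>k\<le>i. v k)) \<and>
       (\<forall>i\<le>l. \<forall>j. \<alpha> i j - \<beta> i j + column j B \<bullet> u i = x $ j) \<and>
       (\<forall>i\<le>l. norm (u i) \<le> \<gamma> i)"
      apply (rule exI[of _ "S 0"], rule exI[of _ v], rule exI[of _ \<gamma>], rule exI[of _ u], rule exI[of _ \<alpha>], rule exI[of _ \<beta>])
      using c1 c2 c3 c4 c5 by blast
  next
    assume "\<exists>(w::real) (v::nat \<Rightarrow> real) (\<gamma>::nat \<Rightarrow> real) (u::nat \<Rightarrow> real^'n) (\<alpha>::nat \<Rightarrow> 'n \<Rightarrow> real) (\<beta>::nat \<Rightarrow> 'n \<Rightarrow> real).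
       (\<forall>i\<le>l. v i \<ge> 0 \<and> \<gamma> i \<ge> 0 \<and> (\<forall>j. \<alpha> i j \<ge> 0 \<and> \<beta> i j \<ge> 0)) \<and>
       w + (\<Sum>i\<le>l. (g_rho \<rho> (real i / real l) - 1) * v i) \<le> b \<and>
       (\<forall>i\<le>l. \<gamma> i * dcut pd \<Gamma> (real i / real l)
                + (\<Sum>j\<in>UNIV. \<alpha> i j * (ucut (pa j) (ahat $ j) (uw $ j) (real i / real l) - ahat $ j))
                + (\<Sum>j\<in>UNIV. \<beta> i j * (ahat $ j - lcut (pa j) (ahat $ j) (lw $ j) (real i / real l)))
                + ahat \<bullet> x
              \<le> w - (\<Sum>k\<le>i. v k)) \<and>
       (\<forall>i\<le>l. \<forall>j. \<alpha> i j - \<beta> i j + column j B \<bullet> u i = x $ j) \<and>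
       (\<forall>i\<le>l. norm (u i) \<le> \<gamma> i)"
    then obtain w v \<gamma>' u' \<alpha>' \<beta>' where
      d1: "\<forall>i\<le>l. v i \<ge> 0 \<and> \<gamma>' i \<ge> 0 \<and> (\<forall>j. \<alpha>' i j \<ge> 0 \<and> \<beta>' i j \<ge> 0)" and
      d2: "w + (\<Sum>i\<le>l. (g_rho \<rho> (real i / real l) - 1) * v i) \<le> b" and
      d3: "\<forall>i\<le>l. \<gamma>' i * dcut pd \<Gamma> (real i / real l)
                + (\<Sum>j\<in>UNIV. \<alpha>' i j * (ucut (pa j) (ahat $ j) (uw $ j) (real i / real l) - ahat $ j))
                + (\<Sum>j\<in>UNIV. \<beta>' i j * (ahat $ j - lcut (pa j) (ahat $ j) (lw $ j) (real i / real l)))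
                + ahat \<bullet> x
              \<le> w - (\<Sum>k\<le>i. v k)" and
      d4: "\<forall>i\<le>l. \<forall>j. \<alpha>' i j - \<beta>' i j + column j B \<bullet> u' i = x $ j" and
      d5: "\<forall>i\<le>l. norm (u' i) \<le> \<gamma>' i"
      by blast
    have d3': "\<gamma>' i * D i + (\<Sum>j\<in>UNIV. \<alpha>' i j * (hi i j - ahat $ j)) + (\<Sum>j\<in>UNIV. \<beta>' i j * (ahat $ j - lo i j))
       + ahat \<bullet> x \<le> w - (\<Sum>k\<le>i. v k)" if "i \<le> l" for i
      using d3 that by (simp add: D_def hi_def lo_def lam_def)
    show "(SUP P \<in> Pset l \<rho> pa ahat lw uw pd \<Gamma> B. ereal (integral\<^sup>L P (\<lambda>a. a \<bullet> x))) \<le> ereal b"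
    proof (rule SUP_least)
      fix P assume P: "P \<in> Pset l \<rho> pa ahat lw uw pd \<Gamma> B"
      then have sP: "sets P = sets borel" and psP: "prob_space P"
        and mP: "\<And>i. i \<le> l \<Longrightarrow> measure P (C i) \<ge> 1 - g_rho \<rho> (lam i)"
        by (auto simp: Pset_def PM_def C_def lam_def)
      interpret P: prob_space P by (rule psP)
      have spP: "space P = UNIV" using sets_eq_imp_space_eq[OF sP] by simp
      have CP: "C i \<in> sets P" for i using Cmeas sP by simp
      have "P.prob (C 0) = 1" using mP[of 0] P.prob_le_1[of "C 0"] lam0 g0 by simp
      then have AE0: "AE a in P. a \<in> C 0" using P.AE_in_set_eq_1[OF CP] by simp
      define phi where "phi a = w - (\<Sum>k\<le>l. v k * indicator (C k) a)" for a
      have pw: "a \<bullet> x \<le> phi a" if a0: "a \<in> C 0" for a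
      proof -
        define K where "K = {k. k \<le> l \<and> a \<in> C k}"
        define m where "m = Max K"
        have fin: "finite K" by (rule finite_subset[of _ "{..l}"]) (auto simp: K_def)
        have ne: "0 \<in> K" using a0 by (simp add: K_def)
        have "m \<in> K" unfolding m_def using fin ne by (intro Max_in) auto
        then have ml: "m \<le> l" and am: "a \<in> C m" by (auto simp: K_def)
        have iff: "a \<in> C k \<longleftrightarrow> k \<le> m" if k: "k \<le> l" for k
        proof
          assume "a \<in> C k"
          then show "k \<le> m" unfolding m_def using fin k by (intro Max_ge) (auto simp: K_def)
        next
          assume "k \<le> m" then show "a \<in> C k" using nest[of k m] am ml by auto
        qed
        have "(\<Sum>k\<le>l. v k * indicator (C k) a) = (\<Sum>k\<le>l. if k \<in> {..m} then v k else 0)"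
          by (intro sum.cong) (auto simp: iff indicator_def)
        also have "\<dots> = sum v ({..l} \<inter> {..m})" by (rule sum.inter_restrict[symmetric]) simp
        also have "{..l} \<inter> {..m} = {..m}" using ml by auto
        finally have sv: "(\<Sum>k\<le>l. v k * indicator (C k) a) = (\<Sum>k\<le>m. v k)" .
        have "a \<bullet> x \<le> \<gamma>' m * D m + (\<Sum>j\<in>UNIV. \<alpha>' m j * (hi m j - ahat $ j))
           + (\<Sum>j\<in>UNIV. \<beta>' m j * (ahat $ j - lo m j)) + ahat \<bullet> x"
          using am ml d1 d4 d5 unfolding Cmem by (intro weak_bound) auto
        also have "\<dots> \<le> w - (\<Sum>k\<le>m. v k)" using d3'[OF ml] .
        finally show ?thesis using sv by (simp add: phi_def)
      qed
      have mb: "measurable P borel = measurable borel borel" by (rule measurable_cong_sets[OF sP refl])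
      have fmeas: "(\<lambda>a. a \<bullet> x) \<in> borel_measurable P"
        unfolding mb by (intro borel_measurable_continuous_onI continuous_intros)
      obtain K where K: "\<And>a. a \<in> C 0 \<Longrightarrow> norm a \<le> K" using Cbdd[of 0] by (auto simp: bounded_iff)
      have "AE a in P. norm (a \<bullet> x) \<le> K * norm x"
        using AE0
      proof (rule AE_mp, intro AE_I2 impI)
        fix a assume "a \<in> C 0"
        then have "norm a * norm x \<le> K * norm x" using K by (intro mult_right_mono) auto
        then show "norm (a \<bullet> x) \<le> K * norm x" using Cauchy_Schwarz_ineq2[of a x] by simp
      qed
      then have intf: "integrable P (\<lambda>a. a \<bullet> x)" using fmeas by (rule P.integrable_const_bound)
      have intI: "integrable P (\<lambda>a. v k * indicator (C k) a :: real)" for k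
        using CP by (intro integrable_mult_right integrable_real_indicator) (auto simp: less_top[symmetric])
      have intS: "integrable P (\<lambda>a. \<Sum>k\<le>l. v k * indicator (C k) a :: real)"
        by (rule Bochner_Integration.integrable_sum) (rule intI)
      have intphi: "integrable P phi" unfolding phi_def
        by (rule Bochner_Integration.integrable_diff[OF P.integrable_const intS])
      have "integral\<^sup>L P phi = integral\<^sup>L P (\<lambda>a. w) - integral\<^sup>L P (\<lambda>a. \<Sum>k\<le>l. v k * indicator (C k) a)"
        unfolding phi_def by (rule Bochner_Integration.integral_diff[OF P.integrable_const intS])
      also have "integral\<^sup>L P (\<lambda>a. w) = w" by (simp add: lebesgue_integral_const P.prob_space)
      also have "integral\<^sup>L P (\<lambda>a. \<Sum>k\<le>l. v k * indicator (C k) a) = (\<Sum>k\<le>l. integral\<^sup>L P (\<lambda>a. v k * indicator (C k) a))"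
        by (rule Bochner_Integration.integral_sum) (rule intI)
      also have "\<dots> = (\<Sum>k\<le>l. v k * measure P (C k))" by (simp add: spP)
      finally have iphi: "integral\<^sup>L P phi = w - (\<Sum>k\<le>l. v k * measure P (C k))" .
      have "(\<Sum>k\<le>l. v k * (1 - g_rho \<rho> (lam k))) \<le> (\<Sum>k\<le>l. v k * measure P (C k))"
        using d1 mP by (intro sum_mono mult_left_mono) auto
      moreover have "(\<Sum>k\<le>l. v k * (1 - g_rho \<rho> (lam k))) = - (\<Sum>i\<le>l. (g_rho \<rho> (real i / real l) - 1) * v i)"
        by (simp add: sum_negf[symmetric] lam_def algebra_simps)
      ultimately have "integral\<^sup>L P phi \<le> b" using iphi d2 by linarith
      moreover have "integral\<^sup>L P (\<lambda>a. a \<bullet> x) \<le> integral\<^sup>L P phi"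
        using intf intphi by (rule integral_mono_AE) (use AE0 pw in auto)
      ultimately show "ereal (integral\<^sup>L P (\<lambda>a. a \<bullet> x)) \<le> ereal b" by simp
    qed
  qed
qed

end
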